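(* For $\pi,\varrho\in K$ let $A_{\pi,\varrho}$ be the two-dimensional algebra with basis $r,r^2$ and multiplication $r\cdot r=r^2$, $r\cdot r^2=\pi r^2$, $r^2\cdot r=\varrho r^2$, $r^2\cdot r^2=\pi\varrho r^2$. Then every $A_{\pi,\varrho}$ is isomorphic to exactly one of the five algebras $A_{0,0},A_{1,1},A_{0,1},A_{1,0},A_{1,-1}$, and these five are pairwise nonisomorphic. Precisely: $A_{0,\varrho}\cong A_{0,1}$ for $\varrho\ne0$, $A_{\pi,0}\cong A_{1,0}$ for $\pi\neq0$, $A_{\pi,\pi}\cong A_{1,1}$ for $\pi\ne0$, and $A_{\pi,\varrho}\cong A_{1,-1}$ for $\pi\ne\varrho$ both nonzero.
   Context: $K$ is a field of characteristic $0$; algebras are not necessarily associative. *)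

theory Defs
  imports Main
begin

text \<open>The algebra A(pi,rho): elements (a,b) stand for a r + b r^2 in the basis r, r^2.
 Multiplication is the bilinear extension of r r = r^2, r r^2 = pi r^2, r^2 r = rho r^2,
 r^2 r^2 = pi rho r^2.\<close>

definition alg_mult :: "'a::field \<Rightarrow> 'a \<Rightarrow> 'a \<times> 'a \<Rightarrow> 'a \<times> 'a \<Rightarrow> 'a \<times> 'a" where
  "alg_mult p q x y =
     (0, fst x * fst y + p * fst x * snd y + q * snd x * fst y + p * q * snd x * snd y)"

definition lin2 :: "('a::field \<times> 'a \<Rightarrow> 'a \<times> 'a) \<Rightarrow> bool" where
  "lin2 f \<longleftrightarrow> (\<forall>x y. f (fst x + fst y, snd x + snd y) = (fst (f x) + fst (f y), snd (f x) + snd (f y)))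
              \<and> (\<forall>c x. f (c * fst x, c * snd x) = (c * fst (f x), c * snd (f x)))"

definition alg_iso :: "'a::field \<Rightarrow> 'a \<Rightarrow> 'a \<Rightarrow> 'a \<Rightarrow> bool" where
  "alg_iso p q p' q' \<longleftrightarrow> (\<exists>f. lin2 f \<and> bij f \<and>
      (\<forall>x y. f (alg_mult p q x y) = alg_mult p' q' (f x) (f y)))"

definition five_params :: "('a::field \<times> 'a) list" where
  "five_params = [(0,0), (1,1), (0,1), (1,0), (1,-1)]"

end

theory Submission
  imports Defs
begin

definition commA :: "'a::field \<Rightarrow> 'a \<Rightarrow> bool" where
  "commA p q \<longleftrightarrow> (\<forall>x y. alg_mult p q x y = alg_mult p q y x)"
definition zl :: "'a::field \<Rightarrow> 'a \<Rightarrow> bool" where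
  "zl p q \<longleftrightarrow> (\<forall>x y z. alg_mult p q (alg_mult p q x y) z = (0,0))"
definition zr :: "'a::field \<Rightarrow> 'a \<Rightarrow> bool" where
  "zr p q \<longleftrightarrow> (\<forall>x y z. alg_mult p q x (alg_mult p q y z) = (0,0))"

lemma commA_iff: "commA p q \<longleftrightarrow> p = q"
proof
  assume "commA p q"
  then have "alg_mult p q (1,0) (0,1) = alg_mult p q (0,1) (1,0)" unfolding commA_def by blast
  then show "p = q" by (simp add: alg_mult_def)
qed (auto simp: commA_def alg_mult_def algebra_simps)

lemma zl_iff: "zl p q \<longleftrightarrow> q = 0"
proof
  assume "zl p q"
  then have "alg_mult p q (alg_mult p q (1,0) (1,0)) (1,0) = (0,0)" unfolding zl_def by blast
  then show "q = 0" by (simp add: alg_mult_def)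
qed (auto simp: zl_def alg_mult_def)

lemma zr_iff: "zr p q \<longleftrightarrow> p = 0"
proof
  assume "zr p q"
  then have "alg_mult p q (1,0) (alg_mult p q (1,0) (1,0)) = (0,0)" unfolding zr_def by blast
  then show "p = 0" by (simp add: alg_mult_def)
qed (auto simp: zr_def alg_mult_def)

lemma lin_zero: "lin2 f \<Longrightarrow> f (0,0) = (0,0)"
  unfolding lin2_def by (metis mult_zero_left fst_conv snd_conv)

lemma iso_inv:
  assumes "alg_iso p q p' q'"
  shows "(p = q \<longleftrightarrow> p' = q') \<and> (p = 0 \<longleftrightarrow> p' = 0) \<and> (q = 0 \<longleftrightarrow> q' = 0)"
proof -
  obtain f where l: "lin2 f" and b: "bij f" and m: "\<And>x y. f (alg_mult p q x y) = alg_mult p' q' (f x) (f y)"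
    using assms unfolding alg_iso_def by blast
  have z: "f (0,0) = (0,0)" using lin_zero[OF l] .
  have inj: "inj f" using b bij_def by blast
  have sur: "\<And>y. \<exists>x. y = f x" using b bij_def by (metis surjD)
  have c: "commA p q \<longleftrightarrow> commA p' q'"
  proof
    assume h: "commA p q"
    show "commA p' q'" unfolding commA_def
    proof (intro allI)
      fix x' y'
      obtain x y where "x' = f x" "y' = f y" using sur by blast
      then show "alg_mult p' q' x' y' = alg_mult p' q' y' x'" using h m unfolding commA_def by metis
    qed
  next
    assume h: "commA p' q'"
    show "commA p q" unfolding commA_def
      using h m inj unfolding commA_def inj_def by metis
  qed
  have zl: "zl p q \<longleftrightarrow> zl p' q'"
  proof
    assume h: "zl p q"
    show "zl p' q'" unfolding zl_def
    proof (intro allI)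
      fix x' y' z'
      obtain x y z where "x' = f x" "y' = f y" "z' = f z" using sur by metis
      then show "alg_mult p' q' (alg_mult p' q' x' y') z' = (0,0)" using h m z unfolding zl_def by metis
    qed
  next
    assume h: "zl p' q'"
    show "zl p q" unfolding zl_def
      using h m inj z unfolding zl_def inj_def by metis
  qed
  have zr: "zr p q \<longleftrightarrow> zr p' q'"
  proof
    assume h: "zr p q"
    show "zr p' q'" unfolding zr_def
    proof (intro allI)
      fix x' y' z'
      obtain x y z where "x' = f x" "y' = f y" "z' = f z" using sur by metis
      then show "alg_mult p' q' x' (alg_mult p' q' y' z') = (0,0)" using h m z unfolding zr_def by metis
    qed
  next
    assume h: "zr p' q'"
    show "zr p q" unfolding zr_def
      using h m inj z unfolding zr_def inj_def by metis
  qed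
  show ?thesis using c zl zr by (simp add: commA_iff zl_iff zr_iff)
qed

lemma mat_lin: "lin2 (\<lambda>x. (ma * fst x + mb * snd x, mc * fst x + md * snd x))"
  unfolding lin2_def by (auto simp: algebra_simps)

lemma div_helper: "(d::'a::field) \<noteq> 0 \<Longrightarrow> N = u * d \<Longrightarrow> N / d = u" by simp

lemma mat_bij:
  fixes ma :: "'a::field"
  assumes d: "ma * md - mb * mc \<noteq> 0"
  shows "bij (\<lambda>x. (ma * fst x + mb * snd x, mc * fst x + md * snd x))"
proof (rule o_bij)
  let ?d = "ma * md - mb * mc"
  let ?g = "\<lambda>x. ((md * fst x - mb * snd x) / ?d, (ma * snd x - mc * fst x) / ?d)"
  show "?g \<circ> (\<lambda>x. (ma * fst x + mb * snd x, mc * fst x + md * snd x)) = id"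
  proof
    fix x :: "'a \<times> 'a"
    obtain u v where x: "x = (u,v)" by fastforce
    have 1: "(md * (ma * u + mb * v) - mb * (mc * u + md * v)) / ?d = u"
      using d by (simp add: field_simps)
    have 2: "(ma * (mc * u + md * v) - mc * (ma * u + mb * v)) / ?d = v"
      using d by (simp add: field_simps; simp add: algebra_simps)
    show "(?g \<circ> (\<lambda>x. (ma * fst x + mb * snd x, mc * fst x + md * snd x))) x = id x"
      using 1 2 x by simp
  qed
  show "(\<lambda>x. (ma * fst x + mb * snd x, mc * fst x + md * snd x)) \<circ> ?g = id"
  proof
    fix x :: "'a \<times> 'a"
    obtain u v where x: "x = (u,v)" by fastforce
    have 1: "ma * ((md * u - mb * v) / ?d) + mb * ((ma * v - mc * u) / ?d) = u"
    proof -
      have "ma * ((md * u - mb * v) / ?d) + mb * ((ma * v - mc * u) / ?d) = (ma * (md * u - mb * v) + mb * (ma * v - mc * u)) / ?d" by (simp add: add_divide_distrib)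
      also have "... = u" by (rule div_helper[OF d]) (simp add: algebra_simps)
      finally show ?thesis .
    qed
    have 2: "mc * ((md * u - mb * v) / ?d) + md * ((ma * v - mc * u) / ?d) = v"
    proof -
      have "mc * ((md * u - mb * v) / ?d) + md * ((ma * v - mc * u) / ?d) = (mc * (md * u - mb * v) + md * (ma * v - mc * u)) / ?d" by (simp add: add_divide_distrib)
      also have "... = v" by (rule div_helper[OF d]) (simp add: algebra_simps)
      finally show ?thesis .
    qed
    show "((\<lambda>x. (ma * fst x + mb * snd x, mc * fst x + md * snd x)) \<circ> ?g) x = id x"
      using 1 2 x by simp
  qed
qed

lemma mat_iso:
  fixes ma :: "'a::field"
  assumes "ma * md - mb * mc \<noteq> 0"
    and "\<And>x y. (\<lambda>x. (ma * fst x + mb * snd x, mc * fst x + md * snd x)) (alg_mult p q x y)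
      = alg_mult p' q' ((\<lambda>x. (ma * fst x + mb * snd x, mc * fst x + md * snd x)) x)
                       ((\<lambda>x. (ma * fst x + mb * snd x, mc * fst x + md * snd x)) y)"
  shows "alg_iso p q p' q'"
  unfolding alg_iso_def using mat_lin mat_bij[OF assms(1)] assms(2) by blast

lemma iso_refl: "alg_iso (p::'a::field) q p q"
  by (rule mat_iso[where ma=1 and mb=0 and mc=0 and md=1]) (auto simp: alg_mult_def)

lemma iso_0q: "(q::'a::field) \<noteq> 0 \<Longrightarrow> alg_iso 0 q 0 1"
  by (rule mat_iso[where ma=q and mb=0 and mc=0 and md="q*q"]) (auto simp: alg_mult_def algebra_simps)

lemma iso_p0: "(p::'a::field) \<noteq> 0 \<Longrightarrow> alg_iso p 0 1 0"
  by (rule mat_iso[where ma=p and mb=0 and mc=0 and md="p*p"]) (auto simp: alg_mult_def algebra_simps)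

lemma iso_pp: "(p::'a::field) \<noteq> 0 \<Longrightarrow> alg_iso p p 1 1"
  by (rule mat_iso[where ma=p and mb=0 and mc=0 and md="p*p"]) (auto simp: alg_mult_def algebra_simps)

lemma iso_pq: "(p::'a::field_char_0) \<noteq> 0 \<Longrightarrow> q \<noteq> 0 \<Longrightarrow> p \<noteq> q \<Longrightarrow> alg_iso p q 1 (-1)"
  by (rule mat_iso[where ma="(p-q)/2" and mb=0 and mc="-(p+q)/2" and md="-p*q"])
     (auto simp: alg_mult_def field_simps)

lemma five_eq: "(five_params::('a::field_char_0 \<times> 'a) list) =  [(0,0), (1,1), (0,1), (1,0), (1,-1)]"
  by (simp add: five_params_def)

lemma inv_distinct:
  assumes "i < 5" "j < 5"
   and "(fst ((five_params::('a::field_char_0\<times>'a) list) ! i) = snd (five_params ! i) \<longleftrightarrow> fst (five_params ! j) = snd ((five_params::('a\<times>'a) list) ! j))"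
   and "(fst ((five_params::('a\<times>'a) list) ! i) = 0 \<longleftrightarrow> fst ((five_params::('a\<times>'a) list) ! j) = 0)"
   and "(snd ((five_params::('a\<times>'a) list) ! i) = 0 \<longleftrightarrow> snd ((five_params::('a\<times>'a) list) ! j) = 0)"
  shows "i = j"
proof -
  have n: "(1::'a) \<noteq> -1" by (rule one_neq_neg_one)
  have "i \<in> {0,1,2,3,4}" "j \<in> {0,1,2,3,4}" using assms(1,2) by auto
  then show ?thesis using assms(3-5) n by (auto simp: five_eq)
qed

theorem proposition5p1:
  fixes dummy :: "'a::field_char_0"
  shows "(\<forall>p q::'a. \<exists>!i. i < 5 \<and> alg_iso p q (fst (five_params ! i)) (snd (five_params ! i)))
    \<and> (\<forall>i j. i < 5 \<longrightarrow> j < 5 \<longrightarrow> i \<noteq> j \<longrightarrow>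
          \<not> alg_iso (fst ((five_params::('a\<times>'a) list) ! i)) (snd (five_params ! i))
                    (fst (five_params ! j)) (snd (five_params ! j)))
    \<and> (\<forall>q::'a. q \<noteq> 0 \<longrightarrow> alg_iso 0 q 0 1)
    \<and> (\<forall>p::'a. p \<noteq> 0 \<longrightarrow> alg_iso p 0 1 0)
    \<and> (\<forall>p::'a. p \<noteq> 0 \<longrightarrow> alg_iso p p 1 1)
    \<and> (\<forall>p q::'a. p \<noteq> 0 \<longrightarrow> q \<noteq> 0 \<longrightarrow> p \<noteq> q \<longrightarrow> alg_iso p q 1 (-1))"
proof (intro conjI allI impI)
  fix p q :: 'a
  have ex: "\<exists>i. i < 5 \<and> alg_iso p q (fst ((five_params::('a\<times>'a) list) ! i)) (snd (five_params ! i))"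
  proof (cases "p = 0")
    case True
    then show ?thesis
    proof (cases "q = 0")
      case True
      then show ?thesis using \<open>p = 0\<close> iso_refl[of p q]
        by (intro exI[of _ 0]) (simp add: five_eq)
    next
      case False
      then show ?thesis using \<open>p = 0\<close> iso_0q[of q]
        by (intro exI[of _ 2]) (simp add: five_eq)
    qed
  next
    case False
    then show ?thesis
    proof (cases "q = 0")
      case True
      then show ?thesis using \<open>p \<noteq> 0\<close> iso_p0[of p]
        by (intro exI[of _ 3]) (simp add: five_eq)
    next
      case q: False
      show ?thesis
      proof (cases "p = q")
        case True
        then show ?thesis using \<open>p \<noteq> 0\<close> iso_pp[of p]
          by (intro exI[of _ 1]) (simp add: five_eq)
      next
        case False
        then show ?thesis using \<open>p \<noteq> 0\<close> q iso_pq[of p q]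
          by (intro exI[of _ 4]) (simp add: five_eq numeral_eq_Suc)
      qed
    qed
  qed
  show "\<exists>!i. i < 5 \<and> alg_iso p q (fst ((five_params::('a\<times>'a) list) ! i)) (snd (five_params ! i))"
  proof (rule ex_ex1I[OF ex])
    fix i j
    assume a: "i < 5 \<and> alg_iso p q (fst ((five_params::('a\<times>'a) list) ! i)) (snd (five_params ! i))"
       and b: "j < 5 \<and> alg_iso p q (fst ((five_params::('a\<times>'a) list) ! j)) (snd (five_params ! j))"
    show "i = j"
      using inv_distinct[of i j] a b iso_inv[of p q "fst ((five_params::('a\<times>'a) list) ! i)"]
        iso_inv[of p q "fst ((five_params::('a\<times>'a) list) ! j)"] by blast
  qed
next
  fix i j :: nat
  assume "i < 5" "j < 5" "i \<noteq> j"
  then show "\<not> alg_iso (fst ((five_params::('a\<times>'a) list) ! i)) (snd (five_params ! i))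
                    (fst (five_params ! j)) (snd (five_params ! j))"
    using inv_distinct[of i j] iso_inv by blast
qed (auto intro: iso_0q iso_p0 iso_pp iso_pq)

end
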